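(* Let $\triangle ABC$ be an obtuse triangle circumscribed about an ellipse with semi-axes $a>b>0$ whose center coincides with the circumcenter of $\triangle ABC$. Then the radius of the polar circle of $\triangle ABC$ equals $\sqrt{2ab}$. Equivalently, the area of the polar circle is twice the area of the ellipse.
   Context: A triangle is circumscribed about a conic if each of its three sidelines is tangent to the conic. For an obtuse triangle $ABC$ with orthocenter $H$, let $H_A$ be the foot of the perpendicular from $A$ to line $BC$. The polar circle of $\triangle ABC$ is the circle with center $H$ and radius $r_p$ with $r_p^2=|AH|\,|HH_A|$. This value does not depend on the chosen vertex. *)

theory Defs
  imports "HOL-Analysis.Analysis"
begin

definition sideline :: "real^2 \<Rightarrow> real^2 \<Rightarrow> (real^2) set" where
  "sideline P Q = {(1 - t) *\<^sub>R P + t *\<^sub>R Q | t. True}"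

text \<open>Ellipse with center Oc, unit orthogonal axis directions u, v and semi-axes a, b
  (along u and v respectively).\<close>
definition ellipse :: "real^2 \<Rightarrow> real^2 \<Rightarrow> real^2 \<Rightarrow> real \<Rightarrow> real \<Rightarrow> (real^2) set" where
  "ellipse Oc u v a b = {p. ((p - Oc) \<bullet> u)\<^sup>2 / a\<^sup>2 + ((p - Oc) \<bullet> v)\<^sup>2 / b\<^sup>2 = 1}"

definition tangent_line :: "(real^2) set \<Rightarrow> (real^2) set \<Rightarrow> bool" where
  "tangent_line L E \<longleftrightarrow> (\<exists>!p. p \<in> L \<and> p \<in> E)"

definition circumscribed_about :: "real^2 \<Rightarrow> real^2 \<Rightarrow> real^2 \<Rightarrow> (real^2) set \<Rightarrow> bool" where
  "circumscribed_about A B C E \<longleftrightarrow>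
     tangent_line (sideline B C) E \<and> tangent_line (sideline C A) E \<and> tangent_line (sideline A B) E"

definition obtuse_triangle :: "real^2 \<Rightarrow> real^2 \<Rightarrow> real^2 \<Rightarrow> bool" where
  "obtuse_triangle A B C \<longleftrightarrow> \<not> collinear {A, B, C} \<and>
     ((B - A) \<bullet> (C - A) < 0 \<or> (A - B) \<bullet> (C - B) < 0 \<or> (A - C) \<bullet> (B - C) < 0)"

definition is_circumcenter :: "real^2 \<Rightarrow> real^2 \<Rightarrow> real^2 \<Rightarrow> real^2 \<Rightarrow> bool" where
  "is_circumcenter Oc A B C \<longleftrightarrow> dist Oc A = dist Oc B \<and> dist Oc B = dist Oc C"

definition is_orthocenter :: "real^2 \<Rightarrow> real^2 \<Rightarrow> real^2 \<Rightarrow> real^2 \<Rightarrow> bool" where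
  "is_orthocenter H A B C \<longleftrightarrow>
     (H - A) \<bullet> (C - B) = 0 \<and> (H - B) \<bullet> (A - C) = 0 \<and> (H - C) \<bullet> (B - A) = 0"

definition is_foot :: "real^2 \<Rightarrow> real^2 \<Rightarrow> real^2 \<Rightarrow> real^2 \<Rightarrow> bool" where
  "is_foot F A B C \<longleftrightarrow> F \<in> sideline B C \<and> (A - F) \<bullet> (C - B) = 0"

end

theory Submission
  imports Defs
begin


lemma inner2: "(x::real^2) \<bullet> y = x $ 1*y $ 1 + x $ 2*y $ 2"
  by (simp add: inner_vec_def sum_2)

lemma normsq2: "(norm (x::real^2))^2 = (x $ 1)^2 + (x $ 2)^2"
  by (simp only: power2_norm_eq_inner inner2) (simp add: power2_eq_square)

lemma orth_inner:
  fixes u v p q :: "real^2"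
  assumes "norm u = 1" "norm v = 1" "u \<bullet> v = 0"
  shows "p \<bullet> q = (p \<bullet> u)*(q \<bullet> u) + (p \<bullet> v)*(q \<bullet> v)"
proof -
  have h1: "(u $ 1)^2 + (u $ 2)^2 = 1" using assms(1) normsq2[of u] by simp
  have h2: "(v $ 1)^2 + (v $ 2)^2 = 1" using assms(2) normsq2[of v] by simp
  have h3: "u $ 1* v $ 1 + u $ 2* v $ 2 = 0" using assms(3) by (simp add: inner2)
  have c1: "(u $ 1)^2 + (v $ 1)^2 = 1" using h1 h2 h3 by algebra
  have c2: "(u $ 2)^2 + (v $ 2)^2 = 1" using h1 h2 h3 by algebra
  have c3: "u $ 1*u $ 2 + v $ 1* v $ 2 = 0" using h1 h2 h3 by algebra
  show ?thesis unfolding inner2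
    using c1 c2 c3 by algebra
qed

lemma perp2:
  fixes z d :: "real^2"
  assumes "z \<noteq> 0" "z \<bullet> d = 0"
  shows "d = ((d \<bullet> (vector [-(z $ 2), z $ 1])) / (z \<bullet> z)) *\<^sub>R (vector [-(z $ 2), z $ 1] :: real^2)"
proof -
  have zz: "z \<bullet> z \<noteq> 0" using assms(1) by simp
  have e: "z $ 1*d $ 1 + z $ 2*d $ 2 = 0" using assms(2) by (simp add: inner2)
  have zz': "z $ 1*z $ 1 + z $ 2*z $ 2 \<noteq> 0" using zz by (simp add: inner2)
  show ?thesis
    unfolding vec_eq_iff forall_2 using zz' e
    by (auto simp: inner2 field_simps) algebra+
qed



lemma coreN:
  fixes w1 w2 w3 c1 c2 c3 r S D :: complex
  assumes "w1*c1 = r" "w2*c2 = r" "w3*c3 = r"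
    and "w1 \<noteq> w2" "w2 \<noteq> w3" "w1 \<noteq> w3"
    and E12: "2*S*r - D*(w1*w2 + c1*c2) = r*(2*r + w1*c2 + c1*w2)"
    and E23: "2*S*r - D*(w2*w3 + c2*c3) = r*(2*r + w2*c3 + c2*w3)"
    and E13: "2*S*r - D*(w1*w3 + c1*c3) = r*(2*r + w1*c3 + c1*w3)"
  shows "r^2*(w1+w2+w3) = D*(w1*w2*w3) \<and> 2*S*r = D*(w1*w2+w2*w3+w1*w3) + r^2"
proof -
  have F12: "D*(w1*w2)^2 + r^2*(w1+w2)^2 - 2*S*r*w1*w2 + D*r^2 = 0"
  proof -
    have "(2*S*r - D*(w1*w2 + c1*c2) - r*(2*r + w1*c2 + c1*w2)) * (w1*w2) = 0"
      using E12 by simp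
    then show ?thesis using assms(1,2) by algebra
  qed
  have F23: "D*(w2*w3)^2 + r^2*(w2+w3)^2 - 2*S*r*w2*w3 + D*r^2 = 0"
  proof -
    have "(2*S*r - D*(w2*w3 + c2*c3) - r*(2*r + w2*c3 + c2*w3)) * (w2*w3) = 0"
      using E23 by simp
    then show ?thesis using assms(2,3) by algebra
  qed
  have F13: "D*(w1*w3)^2 + r^2*(w1+w3)^2 - 2*S*r*w1*w3 + D*r^2 = 0"
  proof -
    have "(2*S*r - D*(w1*w3 + c1*c3) - r*(2*r + w1*c3 + c1*w3)) * (w1*w3) = 0"
      using E13 by simp
    then show ?thesis using assms(1,3) by algebra
  qed
  have "(w2-w3)*(D*w1^2*(w2+w3) + r^2*(2*w1+w2+w3) - 2*S*r*w1) = 0"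
    using F12 F13 by algebra
  then have L1: "D*w1^2*(w2+w3) + r^2*(2*w1+w2+w3) - 2*S*r*w1 = 0"
    using assms(5) by simp
  have "(w1-w3)*(D*w2^2*(w1+w3) + r^2*(2*w2+w1+w3) - 2*S*r*w2) = 0"
    using F12 F23 by algebra
  then have L2: "D*w2^2*(w1+w3) + r^2*(2*w2+w1+w3) - 2*S*r*w2 = 0"
    using assms(6) by simp
  have "(w1-w2)*(D*(w1*w2+w2*w3+w1*w3) + r^2 - 2*S*r) = 0"
    using L1 L2 by algebra
  then have M: "D*(w1*w2+w2*w3+w1*w3) + r^2 - 2*S*r = 0"
    using assms(4) by simp
  have N: "r^2*(w1+w2+w3) = D*(w1*w2*w3)"
    using L1 M by algebra
  show ?thesis using N M by (simp add: algebra_simps)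
qed



lemma aux1:
  fixes a b c ca cb cc r :: complex
  assumes "a*ca = r" "b*cb = r" "c*cc = r"
  shows "r^2*(ca+cb+cc)*(a*b*c) = r^3*(a*b+b*c+a*c)"
proof -
  have "r^2*(ca+cb+cc)*(a*b*c) = r^2*((a*ca)*(b*c) + (b*cb)*(a*c) + (c*cc)*(a*b))"
    by (simp add: algebra_simps)
  also have "\<dots> = r^3*(a*b+b*c+a*c)" using assms by (simp add: algebra_simps power3_eq_cube power2_eq_square)
  finally show ?thesis .
qed

lemma aux2:
  fixes a b c ca cb cc r D :: complex
  assumes "a*ca = r" "b*cb = r" "c*cc = r"
  shows "D*(ca*cb*cc)*(a*b*c) = r^3*D"
proof -
  have "D*(ca*cb*cc)*(a*b*c) = D*((a*ca)*(b*cb)*(c*cc))"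
    by (simp add: algebra_simps)
  also have "\<dots> = r^3*D" using assms by (simp add: algebra_simps power3_eq_cube)
  finally show ?thesis .
qed

lemma core_real:
  fixes x1 y1 x2 y2 x3 y3 R S D :: real
  assumes R: "R > 0"
    and c1: "x1^2 + y1^2 = R^2" and c2: "x2^2 + y2^2 = R^2" and c3: "x3^2 + y3^2 = R^2"
    and d12: "(x1, y1) \<noteq> (x2, y2)" and d23: "(x2, y2) \<noteq> (x3, y3)" and d13: "(x1, y1) \<noteq> (x3, y3)"
    and E12: "S*R^2 - D*(x1*x2 - y1*y2) = R^2*(R^2 + x1*x2 + y1*y2)"
    and E23: "S*R^2 - D*(x2*x3 - y2*y3) = R^2*(R^2 + x2*x3 + y2*y3)"
    and E13: "S*R^2 - D*(x1*x3 - y1*y3) = R^2*(R^2 + x1*x3 + y1*y3)"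
  shows "2*S*R^2 = D^2 + R^4 \<and> R^2*((x1+x2+x3)^2 + (y1+y2+y3)^2) = D^2"
proof -
  define w1 where "w1 = Complex x1 y1"
  define w2 where "w2 = Complex x2 y2"
  define w3 where "w3 = Complex x3 y3"
  define r where "r = complex_of_real (R^2)"
  define S' where "S' = complex_of_real S"
  define D' where "D' = complex_of_real D"
  have wc: "\<And>x y. Complex x y * cnj (Complex x y) = complex_of_real (x^2+y^2)"
    by (simp add: complex_eq_iff power2_eq_square)
  have h1: "w1 * cnj w1 = r" "w2 * cnj w2 = r" "w3 * cnj w3 = r"
    unfolding w1_def w2_def w3_def r_def wc c1 c2 c3 by simp_all
  have h1': "cnj w1 * w1 = r" "cnj w2 * w2 = r" "cnj w3 * w3 = r"
    using h1 by (simp_all add: mult.commute)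
  have dw: "w1 \<noteq> w2" "w2 \<noteq> w3" "w1 \<noteq> w3"
    using d12 d23 d13 by (auto simp: w1_def w2_def w3_def)
  have dc: "cnj w1 \<noteq> cnj w2" "cnj w2 \<noteq> cnj w3" "cnj w1 \<noteq> cnj w3"
    using dw by auto
  have Ec: "\<And>a b p q. S*R^2 - D*(a*p - b*q) = R^2*(R^2 + a*p + b*q) \<Longrightarrow>
     2*S'*r - D'*(Complex a b * Complex p q + cnj (Complex a b) * cnj (Complex p q))
      = r*(2*r + Complex a b * cnj (Complex p q) + cnj (Complex a b) * Complex p q)"
  proof -
    fix a b p q
    assume e: "S*R^2 - D*(a*p - b*q) = R^2*(R^2 + a*p + b*q)"
    show "2*S'*r - D'*(Complex a b * Complex p q + cnj (Complex a b) * cnj (Complex p q))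
      = r*(2*r + Complex a b * cnj (Complex p q) + cnj (Complex a b) * Complex p q)"
      using e by (simp add: complex_eq_iff S'_def D'_def r_def algebra_simps power2_eq_square)
  qed
  have E12': "2*S'*r - D'*(w1*w2 + cnj w1*cnj w2) = r*(2*r + w1*cnj w2 + cnj w1*w2)"
    using Ec[OF E12] by (simp add: w1_def w2_def)
  have E23': "2*S'*r - D'*(w2*w3 + cnj w2*cnj w3) = r*(2*r + w2*cnj w3 + cnj w2*w3)"
    using Ec[OF E23] by (simp add: w3_def w2_def)
  have E13': "2*S'*r - D'*(w1*w3 + cnj w1*cnj w3) = r*(2*r + w1*cnj w3 + cnj w1*w3)"
    using Ec[OF E13] by (simp add: w1_def w3_def)
  have A: "r^2*(w1+w2+w3) = D'*(w1*w2*w3) \<and> 2*S'*r = D'*(w1*w2+w2*w3+w1*w3) + r^2"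
    by (rule coreN[OF h1 dw E12' E23' E13'])
  have B: "r^2*(cnj w1+cnj w2+cnj w3) = D'*(cnj w1*cnj w2*cnj w3)"
  proof -
    have "2*S'*r - D'*(cnj w1*cnj w2 + w1*w2) = r*(2*r + cnj w1*w2 + w1*cnj w2)"
      "2*S'*r - D'*(cnj w2*cnj w3 + w2*w3) = r*(2*r + cnj w2*w3 + w2*cnj w3)"
      "2*S'*r - D'*(cnj w1*cnj w3 + w1*w3) = r*(2*r + cnj w1*w3 + w1*cnj w3)"
      using E12' E23' E13' by (simp_all add: algebra_simps)
    from coreN[OF h1' dc this] show ?thesis by simp
  qed
  have r0: "r \<noteq> 0" using R by (simp add: r_def)
  have P1: "r * ((w1+w2+w3) * cnj (w1+w2+w3)) = D'^2"
  proof -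
    have "(r^2*(w1+w2+w3)) * (r^2*(cnj w1+cnj w2+cnj w3)) = (D'*(w1*w2*w3)) * (D'*(cnj w1*cnj w2*cnj w3))"
      using A B by simp
    also have "\<dots> = D'^2 * r^3"
      using h1 by (simp add: power3_eq_cube power2_eq_square algebra_simps)
    finally have "r^3 * (r * ((w1+w2+w3) * cnj (w1+w2+w3)) - D'^2) = 0"
      by (simp add: algebra_simps power2_eq_square power3_eq_cube)
    then show ?thesis using r0 by simp
  qed
  have P2: "w1*w2+w2*w3+w1*w3 = D'"
  proof -
    have "r^2*(cnj w1+cnj w2+cnj w3) * (w1*w2*w3) = D'*(cnj w1*cnj w2*cnj w3) * (w1*w2*w3)"
      using B by simp
    moreover have "r^2*(cnj w1+cnj w2+cnj w3) * (w1*w2*w3) = r^3 * (w1*w2+w2*w3+w1*w3)"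
      by (rule aux1[OF h1])
    moreover have "D'*(cnj w1*cnj w2*cnj w3) * (w1*w2*w3) = r^3 * D'"
      by (rule aux2[OF h1])
    ultimately have "r^3 * ((w1*w2+w2*w3+w1*w3) - D') = 0" by (simp add: algebra_simps)
    then show ?thesis using r0 by simp
  qed
  have Q1: "complex_of_real (2*S*R^2) = complex_of_real (D^2 + R^4)"
  proof -
    have "2*S'*r = D'*D' + r^2" using A unfolding P2 by simp
    then show ?thesis by (simp add: S'_def D'_def r_def power2_eq_square power4_eq_xxxx)
  qed
  have sig: "w1+w2+w3 = Complex (x1+x2+x3) (y1+y2+y3)"
    by (simp add: w1_def w2_def w3_def complex_eq_iff)
  have Q2: "complex_of_real (R^2*((x1+x2+x3)^2 + (y1+y2+y3)^2)) = complex_of_real (D^2)"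
    using P1 unfolding sig wc by (simp add: r_def D'_def)
  show ?thesis using Q1 Q2 by (simp only: of_real_eq_iff)
qed



lemma tangent_coord:
  fixes P Q Oc u v :: "real^2" and a b :: real
  assumes ab: "a > 0" "b > 0" and uv: "norm u = 1" "norm v = 1" "u \<bullet> v = 0"
    and PQ: "P \<noteq> Q"
    and tg: "tangent_line (sideline P Q) (ellipse Oc u v a b)"
  shows "a^2*((P-Oc)\<bullet>v - (Q-Oc)\<bullet>v)^2 + b^2*((P-Oc)\<bullet>u - (Q-Oc)\<bullet>u)^2
         = (((P-Oc)\<bullet>u)*((Q-Oc)\<bullet>v) - ((P-Oc)\<bullet>v)*((Q-Oc)\<bullet>u))^2"
proof -
  define xP where "xP = (P-Oc)\<bullet>u"
  define yP where "yP = (P-Oc)\<bullet>v"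
  define xQ where "xQ = (Q-Oc)\<bullet>u"
  define yQ where "yQ = (Q-Oc)\<bullet>v"
  define dx where "dx = xQ - xP"
  define dy where "dy = yQ - yP"
  define pt where "pt t = (1-t) *\<^sub>R P + t *\<^sub>R Q" for t
  define q where "q t = b^2*(xP + t*dx)^2 + a^2*(yP + t*dy)^2 - a^2*b^2" for t
  define \<alpha> where "\<alpha> = b^2*dx^2 + a^2*dy^2"
  define \<beta> where "\<beta> = b^2*xP*dx + a^2*yP*dy"
  define \<gamma> where "\<gamma> = b^2*xP^2 + a^2*yP^2 - a^2*b^2"
  have qexp: "q t = \<alpha>*t^2 + 2*\<beta>*t + \<gamma>" for t
    by (simp add: q_def \<alpha>_def \<beta>_def \<gamma>_def power2_eq_square algebra_simps)
  have ptu: "(pt t - Oc) \<bullet> u = xP + t*dx" for t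
  proof -
    have "pt t - Oc = (P - Oc) + t *\<^sub>R ((Q - Oc) - (P - Oc))"
      by (simp add: pt_def algebra_simps)
    then show ?thesis by (simp add: inner_add_left inner_diff_left xP_def xQ_def dx_def)
  qed
  have ptv: "(pt t - Oc) \<bullet> v = yP + t*dy" for t
  proof -
    have "pt t - Oc = (P - Oc) + t *\<^sub>R ((Q - Oc) - (P - Oc))"
      by (simp add: pt_def algebra_simps)
    then show ?thesis by (simp add: inner_add_left inner_diff_left yP_def yQ_def dy_def)
  qed
  have inE: "pt t \<in> ellipse Oc u v a b \<longleftrightarrow> q t = 0" for t
  proof -
    have "pt t \<in> ellipse Oc u v a b \<longleftrightarrow> (xP + t*dx)^2/a^2 + (yP + t*dy)^2/b^2 = 1"
      by (simp add: ellipse_def ptu ptv)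
    also have "\<dots> \<longleftrightarrow> q t = 0"
      using ab by (simp add: q_def field_simps) (simp add: eq_commute)
    finally show ?thesis .
  qed
  have inL: "pt t \<in> sideline P Q" for t
    unfolding sideline_def pt_def by blast
  from tg obtain p where p: "p \<in> sideline P Q" "p \<in> ellipse Oc u v a b"
    and uniq: "\<And>p'. p' \<in> sideline P Q \<Longrightarrow> p' \<in> ellipse Oc u v a b \<Longrightarrow> p' = p"
    unfolding tangent_line_def by blast
  from p(1) obtain t0 where t0: "p = pt t0" unfolding sideline_def pt_def by blast
  have q0: "q t0 = 0" using p(2) inE t0 by simp
  have dpos: "dx^2 + dy^2 > 0"
  proof -
    have "(norm (Q - P))^2 = (Q-P)\<bullet>(Q-P)" by (simp add: power2_norm_eq_inner)
    also have "\<dots> = ((Q-P)\<bullet>u)^2 + ((Q-P)\<bullet>v)^2"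
      using orth_inner[OF uv, of "Q-P" "Q-P"] by (simp add: power2_eq_square)
    also have "(Q-P)\<bullet>u = dx"
    proof -
      have "Q - P = (Q - Oc) - (P - Oc)" by simp
      then show ?thesis by (metis inner_diff_left xP_def xQ_def dx_def)
    qed
    also have "(Q-P)\<bullet>v = dy"
    proof -
      have "Q - P = (Q - Oc) - (P - Oc)" by simp
      then show ?thesis by (metis inner_diff_left yP_def yQ_def dy_def)
    qed
    finally have "(norm (Q - P))^2 = dx^2 + dy^2" .
    moreover have "norm (Q - P) > 0" using PQ by simp
    ultimately show ?thesis by (metis zero_less_power2 less_irrefl)
  qed
  have apos: "\<alpha> > 0"
  proof -
    have "b^2*dx^2 + a^2*dy^2 \<ge> min (a^2) (b^2) * (dx^2 + dy^2)"
      by (simp add: distrib_left add_mono mult_right_mono)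
    moreover have "min (a^2) (b^2) * (dx^2 + dy^2) > 0" using ab dpos by simp
    ultimately show ?thesis unfolding \<alpha>_def by linarith
  qed
  define t1 where "t1 = -2*\<beta>/\<alpha> - t0"
  have "q t1 - q t0 = (t1 - t0)*(\<alpha>*(t1+t0) + 2*\<beta>)"
    by (simp add: qexp power2_eq_square algebra_simps)
  moreover have "\<alpha>*(t1+t0) + 2*\<beta> = 0" using apos by (simp add: t1_def field_simps)
  ultimately have "q t1 = 0" using q0 by simp
  then have "pt t1 = pt t0" using uniq[OF inL] inE t0 by simp
  then have "(t1 - t0) *\<^sub>R (Q - P) = 0" by (simp add: pt_def algebra_simps)
  then have "t1 = t0" using PQ by simp
  then have at0: "\<alpha>*t0 = -\<beta>" using apos by (simp add: t1_def field_simps)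
  have "\<alpha>*q t0 = (\<alpha>*t0)^2 + 2*\<beta>*(\<alpha>*t0) + \<alpha>*\<gamma>"
    by (simp add: qexp power2_eq_square algebra_simps)
  then have ag: "\<alpha>*\<gamma> = \<beta>^2" using q0 at0 by (simp add: power2_eq_square)
  have "\<beta>^2 - \<alpha>*\<gamma> = a^2*b^2*(\<alpha> - (xP*dy - yP*dx)^2)"
    by (simp add: \<alpha>_def \<beta>_def \<gamma>_def power2_eq_square algebra_simps)
  then have "\<alpha> = (xP*dy - yP*dx)^2" using ag ab by simp
  then show ?thesis
    unfolding xP_def[symmetric] yP_def[symmetric] xQ_def[symmetric] yQ_def[symmetric]
    by (simp add: \<alpha>_def dx_def dy_def power2_eq_square algebra_simps)
qed



lemma reduce:
  fixes x1 y1 x2 y2 R X Y :: real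
  assumes c1: "x1^2+y1^2 = R^2" and c2: "x2^2+y2^2 = R^2" and d: "(x1,y1) \<noteq> (x2,y2)"
    and T: "X*(y1-y2)^2 + Y*(x1-x2)^2 = (x1*y2 - y1*x2)^2"
  shows "(X+Y)*R^2 - (Y-X)*(x1*x2 - y1*y2) = R^2*(R^2 + x1*x2 + y1*y2)"
proof -
  have id: "2*R^2*(X*(y1-y2)^2 + Y*(x1-x2)^2 - (x1*y2 - y1*x2)^2)
     = ((x1-x2)^2 + (y1-y2)^2) * ((X+Y)*R^2 - (Y-X)*(x1*x2 - y1*y2) - R^2*(R^2 + x1*x2 + y1*y2))"
    using c1 c2 by algebra
  have nz: "(x1-x2)^2 + (y1-y2)^2 \<noteq> 0"
    using d by (auto simp: add_nonneg_eq_0_iff)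
  have "((x1-x2)^2 + (y1-y2)^2) * ((X+Y)*R^2 - (Y-X)*(x1*x2 - y1*y2) - R^2*(R^2 + x1*x2 + y1*y2)) = 0"
    using id T by simp
  then show ?thesis using nz d by auto
qed



lemma noncol_distinct:
  assumes "\<not> collinear {A, B, C :: real^2}"
  shows "A \<noteq> B" "B \<noteq> C" "A \<noteq> C"
  using assms by (auto simp: insert_commute)

lemma collinear0:
  fixes w :: "real^2"
  shows "collinear {0, s *\<^sub>R w, t *\<^sub>R w}"
proof (cases "s *\<^sub>R w = 0")
  case True then show ?thesis by (simp add: collinear_lemma)
next
  case False
  then have "s \<noteq> 0" by auto
  then have "t *\<^sub>R w = (t/s) *\<^sub>R (s *\<^sub>R w)" by simp
  then show ?thesis unfolding collinear_lemma by blast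
qed

lemma perp_unique:
  fixes A B C z :: "real^2"
  assumes nc: "\<not> collinear {A, B, C}" and h1: "z \<bullet> (C - B) = 0" and h2: "z \<bullet> (A - C) = 0"
  shows "z = 0"
proof (rule ccontr)
  assume z: "z \<noteq> 0"
  define w :: "real^2" where "w = vector [-(z$2), z$1]"
  obtain s where s: "C - B = s *\<^sub>R w" using perp2[OF z h1] unfolding w_def by blast
  obtain t where t: "A - C = t *\<^sub>R w" using perp2[OF z h2] unfolding w_def by blast
  have "A - B = (t + s) *\<^sub>R w" using s t by (simp add: algebra_simps)
  then have "collinear {0, A - B, C - B}" using s collinear0 by simp
  then have "collinear {A, B, C}"
    by (subst collinear_3) (auto simp: insert_commute)
  then show False using nc by simp
qed

lemma parallel_prod:
  fixes p q d :: "real^2"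
  assumes "d \<noteq> 0" "p \<bullet> d = 0" "q \<bullet> d = 0"
  shows "norm p * norm q = \<bar>p \<bullet> q\<bar>"
proof -
  define w :: "real^2" where "w = vector [-(d$2), d$1]"
  obtain s where s: "p = s *\<^sub>R w" using perp2[of d p] assms unfolding w_def by (metis inner_commute)
  obtain t where t: "q = t *\<^sub>R w" using perp2[of d q] assms unfolding w_def by (metis inner_commute)
  have "collinear {0, p, q}" using s t collinear0 by simp
  then show ?thesis using norm_cauchy_schwarz_equal by metis
qed



lemma coordnorm:
  fixes P Q Oc u v :: "real^2"
  assumes uv: "norm u = 1" "norm v = 1" "u \<bullet> v = 0"
  shows "(norm (P - Q))^2 = ((P-Oc)\<bullet>u - (Q-Oc)\<bullet>u)^2 + ((P-Oc)\<bullet>v - (Q-Oc)\<bullet>v)^2"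
proof -
  have e: "P - Q = (P - Oc) - (Q - Oc)" by simp
  have "(norm (P - Q))^2 = (P-Q)\<bullet>(P-Q)" by (simp add: power2_norm_eq_inner)
  also have "\<dots> = ((P-Q)\<bullet>u)^2 + ((P-Q)\<bullet>v)^2"
    using orth_inner[OF uv, of "P-Q" "P-Q"] by (simp add: power2_eq_square)
  finally show ?thesis by (metis e inner_diff_left)
qed

theorem corollary5p16:
  fixes A B C Oc H HA u v :: "real^2" and a b :: real
  assumes "obtuse_triangle A B C"
    and "a > b" and "b > 0"
    and "norm u = 1" and "norm v = 1" and "u \<bullet> v = 0"
    and "is_circumcenter Oc A B C"
    and "circumscribed_about A B C (ellipse Oc u v a b)"
    and "is_orthocenter H A B C"
    and "is_foot HA A B C"
  shows "sqrt (dist A H * dist H HA) = sqrt (2 * a * b)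
         \<and> pi * (sqrt (dist A H * dist H HA))\<^sup>2 = 2 * (pi * a * b)"
proof -
  note uv = assms(4,5,6)
  have ab: "a > 0" "b > 0" using assms(2,3) by auto
  have nc: "\<not> collinear {A, B, C}" using assms(1) by (simp add: obtuse_triangle_def)
  note dist3 = noncol_distinct[OF nc]
  define xA where "xA = (A-Oc)\<bullet>u"
  define yA where "yA = (A-Oc)\<bullet>v"
  define xB where "xB = (B-Oc)\<bullet>u"
  define yB where "yB = (B-Oc)\<bullet>v"
  define xC where "xC = (C-Oc)\<bullet>u"
  define yC where "yC = (C-Oc)\<bullet>v"
  define R where "R = dist Oc A"
  have RB: "norm (B - Oc) = R" "norm (A - Oc) = R" "norm (C - Oc) = R"
    using assms(7) by (auto simp: is_circumcenter_def R_def dist_norm norm_minus_commute)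
  have cA: "xA^2 + yA^2 = R^2" and cB: "xB^2 + yB^2 = R^2" and cC: "xC^2 + yC^2 = R^2"
    using coordnorm[OF uv, of A Oc Oc] coordnorm[OF uv, of B Oc Oc] coordnorm[OF uv, of C Oc Oc] RB
    by (simp_all add: xA_def yA_def xB_def yB_def xC_def yC_def)
  have Rpos: "R > 0"
  proof -
    have "R \<ge> 0" using RB by (metis norm_ge_zero)
    moreover have "R \<noteq> 0"
    proof
      assume "R = 0"
      then have "A = Oc" "B = Oc" using RB by auto
      then show False using dist3 by simp
    qed
    ultimately show ?thesis by simp
  qed
  have dAB: "(xA, yA) \<noteq> (xB, yB)"
    using coordnorm[OF uv, of A B Oc] dist3(1) by (auto simp: xA_def yA_def xB_def yB_def)
  have dBC: "(xB, yB) \<noteq> (xC, yC)"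
    using coordnorm[OF uv, of B C Oc] dist3(2) by (auto simp: xC_def yC_def xB_def yB_def)
  have dAC: "(xA, yA) \<noteq> (xC, yC)"
    using coordnorm[OF uv, of A C Oc] dist3(3) by (auto simp: xA_def yA_def xC_def yC_def)
  have dCA: "(xC, yC) \<noteq> (xA, yA)" using dAC by metis
  have tg: "tangent_line (sideline B C) (ellipse Oc u v a b)"
    "tangent_line (sideline C A) (ellipse Oc u v a b)"
    "tangent_line (sideline A B) (ellipse Oc u v a b)"
    using assms(8) by (auto simp: circumscribed_about_def)
  have TBC: "a^2*(yB - yC)^2 + b^2*(xB - xC)^2 = (xB*yC - yB*xC)^2"
    using tangent_coord[OF ab uv dist3(2) tg(1)] by (simp add: xC_def yC_def xB_def yB_def)
  have TCA: "a^2*(yC - yA)^2 + b^2*(xC - xA)^2 = (xC*yA - yC*xA)^2"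
    using tangent_coord[OF ab uv dist3(3)[symmetric] tg(2)] by (simp add: xC_def yC_def xA_def yA_def)
  have TAB: "a^2*(yA - yB)^2 + b^2*(xA - xB)^2 = (xA*yB - yA*xB)^2"
    using tangent_coord[OF ab uv dist3(1) tg(3)] by (simp add: xA_def yA_def xB_def yB_def)
  define S where "S = a^2 + b^2"
  define D where "D = b^2 - a^2"
  have E12: "S*R^2 - D*(xA*xB - yA*yB) = R^2*(R^2 + xA*xB + yA*yB)"
    using reduce[OF cA cB dAB TAB] by (simp add: S_def D_def)
  have E23: "S*R^2 - D*(xB*xC - yB*yC) = R^2*(R^2 + xB*xC + yB*yC)"
    using reduce[OF cB cC dBC TBC] by (simp add: S_def D_def)
  have E13: "S*R^2 - D*(xA*xC - yA*yC) = R^2*(R^2 + xA*xC + yA*yC)"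
    using reduce[OF cC cA dCA TCA] by (simp add: S_def D_def algebra_simps)
  define Hc where "Hc = (xA+xB+xC)^2 + (yA+yB+yC)^2"
  have cr: "2*S*R^2 = D^2 + R^4 \<and> R^2*Hc = D^2"
    using core_real[OF Rpos cA cB cC dAB dBC dAC E12 E23 E13] by (simp add: Hc_def)
  have "R^4*(16*(a*b)^2) = R^4*(Hc - R^2)^2"
  proof -
    have "R^4*(16*(a*b)^2) = 4*R^4*(S^2 - D^2)"
      by (simp add: S_def D_def power2_eq_square algebra_simps)
    also have "\<dots> = (2*S*R^2)^2 - 4*R^4*D^2" by (simp add: power2_eq_square power4_eq_xxxx algebra_simps)
    also have "\<dots> = (D^2 + R^4)^2 - 4*R^4*D^2" using cr by simp
    also have "\<dots> = (D^2 - R^4)^2" by (simp add: power2_eq_square algebra_simps)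
    also have "\<dots> = (R^2*Hc - R^4)^2" using cr by simp
    also have "\<dots> = R^4*(Hc - R^2)^2" by (simp add: power2_eq_square power4_eq_xxxx algebra_simps)
    finally show ?thesis .
  qed
  then have "(4*(a*b))^2 = (Hc - R^2)^2" using Rpos by (simp add: power2_eq_square)
  then have "sqrt ((4*(a*b))^2) = sqrt ((Hc - R^2)^2)" by simp
  then have "\<bar>4*(a*b)\<bar> = \<bar>Hc - R^2\<bar>" by (simp only: real_sqrt_abs)
  moreover have "4*(a*b) > 0" using ab by simp
  ultimately have ab4: "4*(a*b) = \<bar>Hc - R^2\<bar>" by simp
  define K where "K = Oc + (A - Oc) + (B - Oc) + (C - Oc)"
  have nn: "(B-Oc)\<bullet>(B-Oc) = R^2" "(A-Oc)\<bullet>(A-Oc) = R^2" "(C-Oc)\<bullet>(C-Oc) = R^2"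
    using RB by (simp_all add: power2_norm_eq_inner[symmetric])
  have oc: "(H - A) \<bullet> (C - B) = 0" "(H - B) \<bullet> (A - C) = 0"
    using assms(9) by (auto simp: is_orthocenter_def)
  have HK: "H = K"
  proof -
    have gen: "\<And>p q::real^2. p \<bullet> p = q \<bullet> q \<Longrightarrow> (p+q) \<bullet> (q-p) = 0"
      by (simp add: inner_add_left inner_add_right inner_diff_right inner_diff_left inner_commute)
    have k1: "(K - A) \<bullet> (C - B) = 0"
    proof -
      have "K - A = (B - Oc) + (C - Oc)" "C - B = (C - Oc) - (B - Oc)" by (simp_all add: K_def)
      then show ?thesis using gen[of "B - Oc" "C - Oc"] nn by simp
    qed
    have k2: "(K - B) \<bullet> (A - C) = 0"
    proof -
      have "K - B = (C - Oc) + (A - Oc)" "A - C = (A - Oc) - (C - Oc)" by (simp_all add: K_def)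
      then show ?thesis using gen[of "C - Oc" "A - Oc"] nn by simp
    qed
    have "(H - K) \<bullet> (C - B) = 0"
    proof -
      have "H - K = (H - A) - (K - A)" by simp
      then show ?thesis using oc(1) k1 by (simp add: inner_diff_left)
    qed
    moreover have "(H - K) \<bullet> (A - C) = 0"
    proof -
      have "H - K = (H - B) - (K - B)" by simp
      then show ?thesis using oc(2) k2 by (simp add: inner_diff_left)
    qed
    ultimately have "H - K = 0" using perp_unique[OF nc] by blast
    then show ?thesis by simp
  qed
  obtain t where t: "HA = (1 - t) *\<^sub>R B + t *\<^sub>R C"
    using assms(10) by (auto simp: is_foot_def sideline_def)
  have footp: "(A - HA) \<bullet> (C - B) = 0" using assms(10) by (simp add: is_foot_def)
  have pw: "(A - H) \<bullet> (H - HA) = (A - H) \<bullet> (H - B)"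
  proof -
    have "H - HA = (H - B) - t *\<^sub>R (C - B)" by (simp add: t algebra_simps)
    moreover have "(A - H) \<bullet> (C - B) = 0" using oc(1)
      by (metis inner_minus_left minus_diff_eq neg_equal_0_iff_equal)
    ultimately show ?thesis by (simp only: inner_diff_right inner_scaleR_right)
  qed
  define a' where "a' = A - Oc"
  define b' where "b' = B - Oc"
  define c' where "c' = C - Oc"
  have Hc2: "Hc = (a'+b'+c') \<bullet> (a'+b'+c')"
  proof -
    have "(a'+b'+c') \<bullet> (a'+b'+c') = ((a'+b'+c')\<bullet>u)^2 + ((a'+b'+c')\<bullet>v)^2"
      using orth_inner[OF uv, of "a'+b'+c'" "a'+b'+c'"] by (simp add: power2_eq_square)
    moreover have "xA = a'\<bullet>u" "xB = b'\<bullet>u" "xC = c'\<bullet>u" "yA = a'\<bullet>v" "yB = b'\<bullet>v" "yC = c'\<bullet>v"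
      by (simp_all add: xA_def yA_def xB_def yB_def xC_def yC_def a'_def b'_def c'_def)
    ultimately show ?thesis
      by (simp only: Hc_def inner_add_left)
  qed
  have pw2: "(A - H) \<bullet> (H - B) = - (Hc - R^2)/2"
  proof -
    have e1: "A - H = -(b' + c')" "H - B = a' + c'"
      by (simp_all add: HK K_def a'_def b'_def c'_def algebra_simps)
    have n3: "a' \<bullet> a' = R^2" "b' \<bullet> b' = R^2" "c' \<bullet> c' = R^2"
      using nn by (simp_all add: a'_def b'_def c'_def)
    have "(A - H) \<bullet> (H - B) = (-(b' + c')) \<bullet> (a' + c')" by (simp only: e1)
    also have "\<dots> = - (Hc - R^2)/2" unfolding Hc2 using n3
      by (simp add: inner_add_left inner_add_right inner_commute algebra_simps)
    finally show ?thesis .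
  qed
  have perp1: "(A - H) \<bullet> (C - B) = 0" using oc(1)
    by (metis inner_minus_left minus_diff_eq neg_equal_0_iff_equal)
  have perp2': "(H - HA) \<bullet> (C - B) = 0"
  proof -
    have "(H - HA) \<bullet> (C - B) = ((H - A) + (A - HA)) \<bullet> (C - B)" by simp
    also have "\<dots> = 0" using oc(1) footp by (simp only: inner_add_left)
    finally show ?thesis .
  qed
  have CB: "C - B \<noteq> 0" using dist3(2) by simp
  have prod: "dist A H * dist H HA = 2*a*b"
  proof -
    have "dist A H * dist H HA = norm (A - H) * norm (H - HA)" by (simp add: dist_norm)
    also have "\<dots> = \<bar>(A - H) \<bullet> (H - HA)\<bar>" by (rule parallel_prod[OF CB perp1 perp2'])
    also have "\<dots> = \<bar>Hc - R^2\<bar>/2" using pw pw2 by simp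
    also have "\<dots> = 2*a*b" using ab4 by simp
    finally show ?thesis .
  qed
  have "(sqrt (dist A H * dist H HA))\<^sup>2 = 2*a*b" using prod ab by simp
  then show ?thesis using prod by simp
qed


end
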